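(* For $\tau$ in the upper half-plane, the functions $x=v^2(\tau)$ and $y=v^2(2\tau)$ satisfy $y^2-(x^2-4x+1)y+x^2=0$.
   Context: $q=e^{2\pi i\tau}$, $q^{1/2}=e^{\pi i\tau}$, and $v(\tau)=q^{1/2}\prod_{n\ge1}(1-q^n)^{\left(\frac{8}{n}\right)}$, where $\left(\frac{8}{n}\right)$ is the Kronecker symbol. *)

theory Defs
  imports "HOL-Analysis.Analysis"
begin

definition kronecker8 :: "nat \<Rightarrow> int" where
  "kronecker8 n = (if n mod 8 = 1 \<or> n mod 8 = 7 then 1
                   else if n mod 8 = 3 \<or> n mod 8 = 5 then -1 else 0)"

text \<open>q = exp(2 pi i tau), q^(1/2) = exp(pi i tau).\<close>
definition nome :: "complex \<Rightarrow> complex" where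
  "nome \<tau> = exp (2 * pi * \<i> * \<tau>)"

definition v_fun :: "complex \<Rightarrow> complex" where
  "v_fun \<tau> = exp (pi * \<i> * \<tau>) *
     (\<Prod>n. (1 - nome \<tau> ^ Suc n) powi kronecker8 (Suc n))"

end

theory Submission
  imports Defs "HOL-Computational_Algebra.Polynomial"
begin

lemma prod_conv_nz:
  fixes w :: complex and e :: "nat \<Rightarrow> nat"
  assumes w: "norm w < 1" and e: "\<And>m. Suc m \<le> e m"
  shows "\<exists>L. (\<lambda>M. \<Prod>m<M. (1 - w ^ e m)) \<longlonglongrightarrow> L \<and> L \<noteq> 0"
proof -
  define f where "f = (\<lambda>m. 1 - w ^ e m)"
  have nz: "f m \<noteq> 0" for m
  proof
    assume "f m = 0"
    then have "w ^ e m = 1" by (simp add: f_def)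
    then have "norm w ^ e m = 1" by (metis norm_one norm_power)
    moreover have "norm w ^ e m \<le> norm w ^ 1"
      using w e[of m] by (intro power_decreasing) auto
    moreover have "norm w ^ e m < 1" using calculation(2) w by simp
    ultimately show False by simp
  qed
  have sg: "summable (\<lambda>m. norm w ^ m)" using w by (simp add: summable_geometric)
  have "summable (\<lambda>m. norm (f m - 1))"
  proof (rule summable_comparison_test[OF _ sg])
    show "\<exists>N. \<forall>n\<ge>N. norm (norm (f n - 1)) \<le> norm w ^ n"
    proof (intro exI allI impI)
      fix n :: nat
      have "norm (f n - 1) = norm w ^ e n" by (simp add: f_def norm_power)
      also have "\<dots> \<le> norm w ^ n"
        using w e[of n] by (intro power_decreasing) auto
      finally show "norm (norm (f n - 1)) \<le> norm w ^ n" by simp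
    qed
  qed
  then have "abs_convergent_prod f" by (rule summable_imp_abs_convergent_prod)
  then have cp: "convergent_prod f" by (rule abs_convergent_prod_imp_convergent_prod)
  have "(\<lambda>n. \<Prod>i\<le>n. f i) \<longlonglongrightarrow> prodinf f" by (rule convergent_prod_LIMSEQ[OF cp])
  then have "(\<lambda>n. \<Prod>i<Suc n. f i) \<longlonglongrightarrow> prodinf f" by (simp add: lessThan_Suc_atMost)
  then have "(\<lambda>n. \<Prod>i<n. f i) \<longlonglongrightarrow> prodinf f" using filterlim_sequentially_Suc[of "\<lambda>n. \<Prod>i<n. f i"] by simp
  moreover have "prodinf f \<noteq> 0" by (rule prodinf_nonzero[OF cp nz])
  ultimately show ?thesis unfolding f_def by blast
qed

lemma seq_lower_bound:
  fixes a :: "nat \<Rightarrow> complex"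
  assumes nz: "\<And>m. a m \<noteq> 0" and lim: "a \<longlonglongrightarrow> L" and L: "L \<noteq> 0"
  shows "\<exists>c>0. \<forall>m. c \<le> norm (a m)"
proof -
  have "\<forall>\<^sub>F m in sequentially. dist (a m) L < norm L / 2"
    using lim L unfolding tendsto_iff by (metis half_gt_zero zero_less_norm_iff)
  then obtain N where N: "\<And>m. m \<ge> N \<Longrightarrow> dist (a m) L < norm L / 2"
    by (auto simp: eventually_sequentially)
  define c where "c = min (norm L / 2) (Min (insert 1 ((\<lambda>m. norm (a m)) ` {..<N})))"
  have cpos: "c > 0" using L nz by (auto simp: c_def)
  have "c \<le> norm (a m)" for m
  proof (cases "m \<ge> N")
    case True
    from N[OF True] have "norm L - norm (a m) < norm L / 2"
      by (metis dist_commute dist_norm norm_triangle_ineq2 order_le_less_trans)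
    then show ?thesis unfolding c_def by linarith
  next
    case False
    then have "norm (a m) \<in> insert 1 ((\<lambda>m. norm (a m)) ` {..<N})" by auto
    then have "Min (insert 1 ((\<lambda>m. norm (a m)) ` {..<N})) \<le> norm (a m)" by (intro Min_le) auto
    then show ?thesis unfolding c_def by linarith
  qed
  with cpos show ?thesis by blast
qed

lemma seq_upper_bound:
  fixes a :: "nat \<Rightarrow> complex"
  assumes lim: "a \<longlonglongrightarrow> L"
  shows "\<exists>C>0. \<forall>m. norm (a m) \<le> C"
  using convergent_imp_Bseq[of a] lim by (auto simp: Bseq_def convergent_def)


definition pp :: "complex \<Rightarrow> nat \<Rightarrow> complex" where
  "pp x n = (\<Prod>i<n. (1 - x ^ (2 * Suc i)))"

definition gb :: "complex \<Rightarrow> nat \<Rightarrow> nat \<Rightarrow> complex" where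
  "gb x N k = pp x N / (pp x k * pp x (N - k))"

definition Qp :: "complex \<Rightarrow> nat \<Rightarrow> complex poly" where
  "Qp x N = (\<Prod>k<N. [:1, x ^ (2 * k):])"

lemma pp_0 [simp]: "pp x 0 = 1" by (simp add: pp_def)
lemma pp_Suc: "pp x (Suc n) = pp x n * (1 - x ^ (2 * Suc n))"
  by (simp add: pp_def)

lemma coeff_mult_lin: "coeff (p * [:1, c:]) k = coeff p k + (if k = 0 then 0 else c * coeff p (k - 1))" for p :: "complex poly"
  by (cases k) (auto simp: mult_pCons_right coeff_pCons)

lemma field_aux:
  fixes X T P a b u v :: complex
  assumes "a \<noteq> 0" "b \<noteq> 0" "u \<noteq> 0" "v \<noteq> 0"
  shows "X * T * (P * (u + v - u * v) / (a * u * (b * v)))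
       = X * T * (P / (a * u * b)) + T * (1 - v) * (X * (P / (a * (b * v))))"
  using assms by (simp add: field_simps)

lemma coeff_Qp:
  assumes nz: "\<And>n. pp x n \<noteq> 0"
  shows "coeff (Qp x N) k = (if k \<le> N then x ^ (k * (k - 1)) * gb x N k else 0)"
proof (induction N arbitrary: k)
  case 0
  then show ?case by (cases k) (simp_all add: Qp_def gb_def)
next
  case (Suc N)
  have Q: "Qp x (Suc N) = Qp x N * [:1, x ^ (2 * N):]" by (simp add: Qp_def)
  show ?case
  proof (cases k)
    case 0
    then show ?thesis using nz[of "Suc N"] nz[of N] by (simp add: Q coeff_mult_lin Suc.IH gb_def)
  next
    case (Suc k')
    have c: "coeff (Qp x (Suc N)) k = coeff (Qp x N) (Suc k') + x ^ (2 * N) * coeff (Qp x N) k'"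
      by (simp add: Q coeff_mult_lin Suc)
    consider "Suc k' \<le> N" | "k' = N" | "k' > N" by linarith
    then show ?thesis
    proof cases
      case 1
      then obtain m where N: "N = Suc k' + m" using le_Suc_ex by blast
      have e1: "Suc k' * k' = k' * (k' - 1) + 2 * k'" by (cases k') auto
      have xe1: "x ^ (Suc k' * k') = x ^ (k' * (k' - 1)) * x ^ (2 * k')"
        unfolding e1 power_add by simp
      have sN: "Suc N - Suc k' = Suc m" "N - Suc k' = m" "N - k' = Suc m" using N by auto
      have eN: "2 * Suc N = 2 * k' + 2 * m + 2 * 2" using N by simp
      have xN1: "x ^ (2 * Suc N) = x ^ (2 * k') * x ^ (2 * m) * (x^2)^2"
        by (simp only: eN power_add power_mult)
      have xk1: "x ^ (2 * Suc k') = x ^ (2 * k') * x^2"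
        by (simp only: mult_Suc_right power_add power_mult add.commute[of 2])
      have xm1: "x ^ (2 * Suc m) = x ^ (2 * m) * x^2"
        by (simp only: mult_Suc_right power_add power_mult add.commute[of 2])
      have g1: "gb x (Suc N) (Suc k') = pp x N * (1 - x ^ (2 * k') * x ^ (2 * m) * (x^2)^2)
            / (pp x k' * (1 - x ^ (2 * k') * x^2) * (pp x m * (1 - x ^ (2 * m) * x^2)))"
        unfolding gb_def sN pp_Suc xN1 xk1 xm1 ..
      have g2: "gb x N (Suc k') = pp x N / (pp x k' * (1 - x ^ (2 * k') * x^2) * pp x m)"
        unfolding gb_def sN pp_Suc xk1 ..
      have g3: "gb x N k' = pp x N / (pp x k' * (pp x m * (1 - x ^ (2 * m) * x^2)))"
        unfolding gb_def sN pp_Suc xm1 ..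
      have x2N: "x ^ (2 * N) = x ^ (2 * k') * x ^ (2 * m) * x^2"
      proof -
        have "2 * N = 2 * k' + 2 * m + 2" using N by simp
        then show ?thesis by (simp only: power_add power_mult power_one_right)
      qed
      have n1: "1 - x ^ (2 * k') * x^2 \<noteq> 0"
        using nz[of "Suc k'"] unfolding pp_Suc xk1 by simp
      have n2: "1 - x ^ (2 * m) * x^2 \<noteq> 0"
        using nz[of "Suc m"] unfolding pp_Suc xm1 by simp
      define T where "T = x ^ (2 * k')"
      define S where "S = x ^ (2 * m)"
      define u where "u = 1 - T * x^2"
      define v where "v = 1 - S * x^2"
      have uv: "1 - T * S * (x^2)^2 = u + v - u * v" unfolding u_def v_def by (simp add: algebra_simps power2_eq_square)
      have Sv: "S * x^2 = 1 - v" unfolding v_def by simp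
      have "coeff (Qp x (Suc N)) k = x ^ (Suc k' * k') * gb x N (Suc k') + x ^ (2 * N) * (x ^ (k' * (k' - 1)) * gb x N k')"
        using 1 by (simp add: c Suc.IH)
      also have "\<dots> = x ^ (k' * (k' - 1)) * T * (pp x N / (pp x k' * u * pp x m)) + T * (1 - v) * (x ^ (k' * (k' - 1)) * (pp x N / (pp x k' * (pp x m * v))))"
        unfolding xe1 g2 g3 x2N T_def[symmetric] S_def[symmetric] u_def[symmetric] v_def[symmetric]
        by (simp add: Sv[symmetric] algebra_simps)
      also have "\<dots> = x ^ (k' * (k' - 1)) * T * (pp x N * (u + v - u * v) / (pp x k' * u * (pp x m * v)))"
        by (rule field_aux[symmetric]) (use nz n1 n2 in \<open>auto simp: u_def v_def T_def S_def\<close>)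
      also have "\<dots> = x ^ (Suc k' * k') * gb x (Suc N) (Suc k')"
        unfolding xe1 g1 T_def[symmetric] S_def[symmetric] u_def[symmetric] v_def[symmetric] uv
        by (simp add: algebra_simps)
      finally show ?thesis using 1 Suc by simp
    next
      case 2
      have "coeff (Qp x (Suc N)) k = x ^ (2 * N) * (x ^ (N * (N - 1)) * gb x N N)"
        using 2 by (simp add: c Suc.IH)
      also have "\<dots> = x ^ (Suc N * N)"
      proof -
        have "gb x N N = 1" using nz[of N] by (simp add: gb_def)
        moreover have "2 * N + N * (N - 1) = Suc N * N" by (cases N) simp_all
        ultimately show ?thesis by (metis mult.right_neutral power_add)
      qed
      also have "\<dots> = x ^ (k * (k - 1)) * gb x (Suc N) k"
        using 2 Suc nz[of "Suc N"] by (simp add: gb_def)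
      finally show ?thesis using 2 Suc by simp
    next
      case 3
      then show ?thesis unfolding c using Suc.IH[of k'] Suc.IH[of "Suc k'"] Suc by simp
    qed
  qed
qed

lemma degree_Qp: "degree (Qp x N) \<le> N"
proof -
  have "degree (Qp x N) \<le> (\<Sum>k<N. degree [:1, x ^ (2 * k):])"
    unfolding Qp_def using degree_prod_sum_le[of "{..<N}" "\<lambda>k. [:1, x ^ (2 * k):]"] by (simp add: o_def)
  also have "\<dots> \<le> (\<Sum>k<N. 1)" by (intro sum_mono) auto
  finally show ?thesis by simp
qed

lemma qbinomial:
  assumes nz: "\<And>n. pp x n \<noteq> 0"
  shows "(\<Prod>k<N. (1 + w * x ^ (2 * k))) = (\<Sum>k\<le>N. x ^ (k * (k - 1)) * gb x N k * w ^ k)"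
proof -
  have "(\<Prod>k<N. (1 + w * x ^ (2 * k))) = poly (Qp x N) w"
    by (simp add: Qp_def poly_prod algebra_simps)
  also have "\<dots> = (\<Sum>k\<le>N. coeff (Qp x N) k * w ^ k)"
  proof -
    have "poly (Qp x N) w = poly (\<Sum>i\<le>N. monom (coeff (Qp x N) i) i) w"
      by (simp add: poly_as_sum_of_monoms'[OF degree_Qp])
    then show ?thesis by (simp add: poly_sum poly_monom)
  qed
  also have "\<dots> = (\<Sum>k\<le>N. x ^ (k * (k - 1)) * gb x N k * w ^ k)"
    by (intro sum.cong) (auto simp: coeff_Qp[OF nz])
  finally show ?thesis .
qed


lemma prod_split_half:
  fixes G :: "nat \<Rightarrow> complex"
  shows "(\<Prod>k<2*n. G k) = (\<Prod>i<n. G (n + i)) * (\<Prod>i<n. G (n - Suc i))"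
proof -
  have u: "{..<2*n} = {..<n} \<union> {n..<2*n}" by auto
  have "(\<Prod>k<2*n. G k) = (\<Prod>k<n. G k) * (\<Prod>k\<in>{n..<2*n}. G k)"
    unfolding u by (rule prod.union_disjoint) auto
  also have "(\<Prod>k\<in>{n..<2*n}. G k) = (\<Prod>i<n. G (n + i))"
  proof -
    have "{n..<2*n} = (\<lambda>i. n + i) ` {..<n}"
      apply (rule set_eqI)
      apply (simp add: image_iff)
      apply (rule iffI)
       apply (rule_tac x="x - n" in bexI)
      by auto
    then show ?thesis by (simp add: prod.reindex inj_on_def)
  qed
  also have "(\<Prod>k<n. G k) = (\<Prod>i<n. G (n - Suc i))"
    by (rule prod.nat_diff_reindex[symmetric])
  finally show ?thesis by (simp add: mult.commute)
qed

lemma prod_neg_pow: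
  fixes x z :: complex
  assumes "x \<noteq> 0"
  shows "(\<Prod>i<n. z * x powi (-(2 * int i + 1))) = z ^ n * x powi (- (int n ^ 2))"
proof (induction n)
  case 0 then show ?case by simp
next
  case (Suc n)
  have "(\<Prod>i<Suc n. z * x powi (-(2 * int i + 1))) = z ^ n * x powi (- (int n ^ 2)) * (z * x powi (-(2 * int n + 1)))"
    by (simp only: prod.lessThan_Suc Suc.IH)
  also have "\<dots> = z ^ Suc n * (x powi (- (int n ^ 2)) * x powi (-(2 * int n + 1)))" by simp
  also have "x powi (- (int n ^ 2)) * x powi (-(2 * int n + 1)) = x powi (- (int (Suc n) ^ 2))"
    using assms by (simp add: power_int_add[symmetric] power2_eq_square algebra_simps)
  finally show ?case .
qed

lemma finite_jtp:
  fixes x z :: complex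
  assumes x: "x \<noteq> 0" and z: "z \<noteq> 0" and nz: "\<And>n. pp x n \<noteq> 0"
  shows "(\<Prod>i<n. (1 + z * x ^ (2 * i + 1)) * (1 + x ^ (2 * i + 1) / z))
       = (\<Sum>j\<in>{-int n..int n}. gb x (2 * n) (nat (j + int n)) * x powi (j^2) * z powi j)"
proof -
  define w where "w = z * x powi (1 - 2 * int n)"
  define G where "G = (\<lambda>k. 1 + w * x ^ (2 * k))"
  have q: "(\<Prod>k<2*n. G k) = (\<Sum>k\<le>2*n. x ^ (k * (k - 1)) * gb x (2*n) k * w ^ k)"
    unfolding G_def by (rule qbinomial[OF nz])
  have G1: "G (n + i) = 1 + z * x ^ (2 * i + 1)" for i
  proof -
    have "w * x ^ (2 * (n + i)) = z * (x powi (1 - 2 * int n) * x powi (int (2 * (n + i))))"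
      unfolding w_def power_int_of_nat[symmetric] by (simp only: mult.assoc)
    also have "\<dots> = z * x powi (int (2 * i + 1))"
    proof -
      have e: "1 - 2 * int n + int (2 * (n + i)) = int (2 * i + 1)" by simp
      show ?thesis by (simp only: power_int_add[OF disjI1[OF x], symmetric] e)
    qed
    also have "\<dots> = z * x ^ (2 * i + 1)" by (simp only: power_int_of_nat)
    finally show ?thesis by (simp add: G_def)
  qed
  have G2: "G (n - Suc i) = z * x powi (-(2 * int i + 1)) * (1 + x ^ (2 * i + 1) / z)" if "i < n" for i
  proof -
    have "w * x ^ (2 * (n - Suc i)) = z * (x powi (1 - 2 * int n) * x powi (int (2 * (n - Suc i))))"
      unfolding w_def power_int_of_nat[symmetric] by (simp only: mult.assoc)
    also have "\<dots> = z * x powi (-(2 * int i + 1))"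
    proof -
      have e: "1 - 2 * int n + int (2 * (n - Suc i)) = -(2 * int i + 1)" using that by (simp add: of_nat_diff)
      show ?thesis by (simp only: power_int_add[OF disjI1[OF x], symmetric] e)
    qed
    finally have "G (n - Suc i) = 1 + z * x powi (-(2 * int i + 1))" by (simp add: G_def)
    also have "\<dots> = z * x powi (-(2 * int i + 1)) * (1 + x ^ (2 * i + 1) / z)"
    proof -
      have ee: "-(2 * int i + 1) = - int (2*i+1)" by simp
      have "x powi (-(2 * int i + 1)) * x ^ (2 * i + 1) = 1"
        by (simp only: ee power_int_minus power_int_of_nat) (use x in \<open>simp add: field_simps\<close>)
      then show ?thesis using z by (simp add: field_simps)
    qed
    finally show ?thesis .
  qed
  have "(\<Prod>k<2*n. G k) = (\<Prod>i<n. (1 + z * x ^ (2 * i + 1))) * (\<Prod>i<n. z * x powi (-(2 * int i + 1)) * (1 + x ^ (2 * i + 1) / z))"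
    unfolding prod_split_half G1 by (simp add: G2)
  also have "\<dots> = z ^ n * x powi (- (int n ^ 2)) * (\<Prod>i<n. (1 + z * x ^ (2 * i + 1)) * (1 + x ^ (2 * i + 1) / z))"
  proof -
    have A: "(\<Prod>i<n. z * x powi (-(2 * int i + 1)) * (1 + x ^ (2 * i + 1) / z)) = (\<Prod>i<n. z * x powi (-(2 * int i + 1))) * (\<Prod>i<n. 1 + x ^ (2 * i + 1) / z)"
      by (rule prod.distrib)
    have B: "(\<Prod>i<n. (1 + z * x ^ (2 * i + 1)) * (1 + x ^ (2 * i + 1) / z)) = (\<Prod>i<n. (1 + z * x ^ (2 * i + 1))) * (\<Prod>i<n. 1 + x ^ (2 * i + 1) / z)"
      by (rule prod.distrib)
    show ?thesis unfolding A B prod_neg_pow[OF x] by (simp only: mult_ac)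
  qed
  finally have L: "(\<Prod>i<n. (1 + z * x ^ (2 * i + 1)) * (1 + x ^ (2 * i + 1) / z))
      = z powi (- int n) * x powi (int n ^ 2) * (\<Prod>k<2*n. G k)"
    using x z by (simp add: power_int_minus field_simps flip: power_int_of_nat)
  have trm: "z powi (- int n) * x powi (int n ^ 2) * (x ^ (k * (k - 1)) * gb x (2*n) k * w ^ k)
      = gb x (2 * n) k * x powi ((int k - int n)^2) * z powi (int k - int n)" for k
  proof -
    have e1: "int (k * (k - 1)) = int k * (int k - 1)" by (cases k) (auto simp: algebra_simps)
    have "w ^ k = z ^ k * x powi ((1 - 2 * int n) * int k)"
      by (simp add: w_def power_mult_distrib power_int_power')
    then have "z powi (- int n) * x powi (int n ^ 2) * (x ^ (k * (k - 1)) * gb x (2*n) k * w ^ k)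
        = gb x (2*n) k * (z powi (- int n) * z powi (int k)) * (x powi (int n ^ 2) * x powi (int (k * (k - 1))) * x powi ((1 - 2 * int n) * int k))"
      by (simp add: algebra_simps flip: power_int_of_nat)
    also have "z powi (- int n) * z powi (int k) = z powi (int k - int n)"
    proof -
      have "- int n + int k = int k - int n" by simp
      then show ?thesis by (simp only: power_int_add[OF disjI1[OF z], symmetric])
    qed
    also have "x powi (int n ^ 2) * x powi (int (k * (k - 1))) * x powi ((1 - 2 * int n) * int k) = x powi ((int k - int n)^2)"
      using x unfolding e1 by (simp add: power_int_add[symmetric] power2_eq_square algebra_simps)
    finally show ?thesis by (simp add: algebra_simps)
  qed
  have "(\<Prod>i<n. (1 + z * x ^ (2 * i + 1)) * (1 + x ^ (2 * i + 1) / z))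
      = (\<Sum>k\<le>2*n. gb x (2 * n) k * x powi ((int k - int n)^2) * z powi (int k - int n))"
    unfolding L q sum_distrib_left trm ..
  also have "\<dots> = (\<Sum>j\<in>{-int n..int n}. gb x (2 * n) (nat (j + int n)) * x powi (j^2) * z powi j)"
    by (rule sum.reindex_bij_witness[where i = "\<lambda>j. nat (j + int n)" and j = "\<lambda>k. int k - int n"]) auto
  finally show ?thesis .
qed


abbreviation ass :: "('a \<Rightarrow> complex) \<Rightarrow> 'a set \<Rightarrow> bool" where
  "ass f A \<equiv> Infinite_Set_Sum.abs_summable_on f A"

abbreviation assr :: "('a \<Rightarrow> real) \<Rightarrow> 'a set \<Rightarrow> bool" where
  "assr f A \<equiv> Infinite_Set_Sum.abs_summable_on f A"

lemma geo_int:
  fixes r :: real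
  assumes "0 \<le> r" "r < 1"
  shows "assr (\<lambda>j::int. r ^ nat \<bar>j\<bar>) UNIV"
proof -
  have U: "(UNIV :: int set) = range int \<union> range (\<lambda>n. - int n)"
  proof (rule set_eqI, rule iffI)
    fix j :: int
    show "j \<in> range int \<union> range (\<lambda>n. - int n)"
    proof (cases "j \<ge> 0")
      case True then have "j = int (nat j)" by simp
      then show ?thesis by blast
    next
      case False then have "j = - int (nat (-j))" by simp
      then show ?thesis by blast
    qed
  qed simp
  have s: "assr (\<lambda>n::nat. r ^ n) UNIV"
    unfolding abs_summable_on_nat_iff' using assms by (simp add: summable_geometric)
  have a1: "assr (\<lambda>j::int. r ^ nat \<bar>j\<bar>) (range int)"
    using abs_summable_on_reindex_iff[of int UNIV "\<lambda>j::int. r ^ nat \<bar>j\<bar>"] s by simp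
  have a2: "assr (\<lambda>j::int. r ^ nat \<bar>j\<bar>) (range (\<lambda>n. - int n))"
    using abs_summable_on_reindex_iff[of "\<lambda>n. - int n" UNIV "\<lambda>j::int. r ^ nat \<bar>j\<bar>"] s
    by (simp add: inj_on_def)
  show ?thesis unfolding U using a1 a2 by (rule abs_summable_on_union)
qed

lemma norm_powi_bound:
  fixes z :: complex and r :: real
  assumes r: "0 < r" and zl: "r \<le> norm z" and zu: "norm z * r \<le> 1"
  shows "norm (z powi j) \<le> inverse (r ^ nat \<bar>j\<bar>)"
proof (cases "j \<ge> 0")
  case True
  have "norm (z powi j) = norm z ^ nat j" using True by (simp add: power_int_def norm_power)
  also have "\<dots> \<le> (inverse r) ^ nat j"
    using zu r by (intro power_mono) (auto simp: field_simps)
  also have "\<dots> = inverse (r ^ nat \<bar>j\<bar>)" using True by (simp add: power_inverse)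
  finally show ?thesis .
next
  case False
  have "norm (z powi j) = inverse (norm z ^ nat (-j))" using False
    by (simp add: power_int_def norm_power norm_inverse power_inverse)
  also have "\<dots> \<le> inverse (r ^ nat (-j))"
    using zl r by (intro le_imp_inverse_le power_mono) auto
  also have "\<dots> = inverse (r ^ nat \<bar>j\<bar>)" using False by simp
  finally show ?thesis .
qed

lemma theta_term_bound:
  fixes x z :: complex
  assumes x0: "x \<noteq> 0" and x1: "norm x < 1" and zl: "norm x \<le> norm z" and zu: "norm z * norm x \<le> 1"
  shows "norm (x powi (j^2) * z powi j) \<le> inverse (norm x ^ 2) * norm x ^ nat \<bar>j\<bar>"
proof -
  define r where "r = norm x"
  define a where "a = nat \<bar>j\<bar>"
  have r: "0 < r" "r < 1" using x0 x1 by (auto simp: r_def)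
  have j2: "j^2 = int (a * a)" by (simp add: a_def power2_eq_square abs_mult[symmetric])
  have "norm (x powi (j^2)) = r ^ (a * a)"
    unfolding j2 power_int_of_nat by (simp add: r_def norm_power)
  moreover have "norm (z powi j) \<le> inverse (r ^ a)"
    unfolding a_def using norm_powi_bound[of r z j] r zl zu by (simp add: r_def)
  ultimately have "norm (x powi (j^2) * z powi j) \<le> r ^ (a * a) * inverse (r ^ a)"
    using r by (simp add: norm_mult mult_left_mono)
  also have "\<dots> \<le> inverse (r ^ 2) * r ^ a"
  proof -
    have "2 * a \<le> a * a + 2"
    proof (cases "a \<ge> 2")
      case True
      then have "2 * a \<le> a * a" by (intro mult_right_mono) auto
      then show ?thesis by linarith
    next
      case False then have "a = 0 \<or> a = 1" by auto
      then show ?thesis by auto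
    qed
    then have "r ^ (a * a + 2) \<le> r ^ (2 * a)" using r by (intro power_decreasing) auto
    then have "r ^ (a * a) * r ^ 2 \<le> r ^ a * r ^ a" by (metis power_add mult_2)
    then show ?thesis using r by (simp add: field_simps)
  qed
  finally show ?thesis by (simp add: r_def a_def)
qed

lemma filterlim_nat_shift:
  fixes f :: "nat \<Rightarrow> nat"
  assumes "\<And>n. n \<le> f n + K"
  shows "filterlim f at_top sequentially"
  unfolding filterlim_at_top eventually_sequentially
proof
  fix Z show "\<exists>N. \<forall>n\<ge>N. Z \<le> f n"
    using assms by (intro exI[of _ "Z + K"]) (metis add_le_cancel_right le_trans)
qed


lemma pow_factor_nz:
  fixes x :: complex
  assumes "norm x < 1" "k > 0"
  shows "1 - x ^ k \<noteq> 0"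
proof
  assume "1 - x ^ k = 0"
  then have "norm (x ^ k) = 1" by (metis eq_iff_diff_eq_0 norm_one)
  moreover have "norm (x ^ k) \<le> norm x ^ 1" unfolding norm_power
    using assms by (intro power_decreasing) auto
  ultimately show False using assms by simp
qed

theorem jtp:
  fixes x z :: complex
  assumes x0: "x \<noteq> 0" and x1: "norm x < 1" and z0: "z \<noteq> 0"
    and zl: "norm x \<le> norm z" and zu: "norm z * norm x \<le> 1"
  shows "(\<lambda>n. \<Prod>i<n. (1 - x ^ (2 * Suc i)) * ((1 + z * x ^ (2 * i + 1)) * (1 + x ^ (2 * i + 1) / z)))
          \<longlonglongrightarrow> infsetsum (\<lambda>j. x powi (j^2) * z powi j) UNIV"
proof -
  define t where "t = (\<lambda>j::int. x powi (j^2) * z powi j)"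
  have f: "1 - x ^ (2 * Suc i) \<noteq> 0" for i by (rule pow_factor_nz[OF x1]) simp
  have nz: "pp x n \<noteq> 0" for n
    by (induction n) (use f in \<open>simp_all only: pp_0 pp_Suc mult_eq_0_iff one_neq_zero\<close>, auto)
  have "\<exists>L. (\<lambda>M. \<Prod>m<M. (1 - x ^ (2 * Suc m))) \<longlonglongrightarrow> L \<and> L \<noteq> 0"
    by (rule prod_conv_nz) (use x1 in auto)
  then obtain E where E: "pp x \<longlonglongrightarrow> E" "E \<noteq> 0"
    unfolding pp_def[abs_def] by blast
  obtain c where c: "c > 0" "\<And>m. c \<le> norm (pp x m)"
    using seq_lower_bound[OF nz E] by blast
  obtain C where C: "C > 0" "\<And>m. norm (pp x m) \<le> C"
    using seq_upper_bound[OF E(1)] by blast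
  define s where "s = (\<lambda>n j. if j \<in> {-int n..int n} then pp x n * gb x (2*n) (nat (j + int n)) * t j else 0)"
  have LHS: "(\<Prod>i<n. (1 - x ^ (2 * Suc i)) * ((1 + z * x ^ (2 * i + 1)) * (1 + x ^ (2 * i + 1) / z)))
       = infsetsum (s n) UNIV" for n
  proof -
    have "(\<Prod>i<n. (1 - x ^ (2 * Suc i)) * ((1 + z * x ^ (2 * i + 1)) * (1 + x ^ (2 * i + 1) / z)))
        = pp x n * (\<Prod>i<n. (1 + z * x ^ (2 * i + 1)) * (1 + x ^ (2 * i + 1) / z))"
      unfolding pp_def by (rule prod.distrib)
    also have "\<dots> = pp x n * (\<Sum>j\<in>{-int n..int n}. gb x (2 * n) (nat (j + int n)) * x powi (j^2) * z powi j)"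
      by (simp only: finite_jtp[OF x0 z0 nz])
    also have "\<dots> = (\<Sum>j\<in>{-int n..int n}. s n j)"
      unfolding sum_distrib_left by (intro sum.cong) (auto simp: s_def t_def mult_ac)
    also have "\<dots> = infsetsum (s n) {-int n..int n}" by simp
    also have "\<dots> = infsetsum (s n) UNIV"
      by (rule infsetsum_cong_neutral) (auto simp: s_def)
    finally show ?thesis .
  qed
  define W where "W = (\<lambda>j::int. (C * C / (c * c)) * (inverse (norm x ^ 2) * norm x ^ nat \<bar>j\<bar>))"
  have Wi: "integrable (count_space UNIV) W"
  proof -
    have "assr (\<lambda>j::int. norm x ^ nat \<bar>j\<bar>) UNIV" by (rule geo_int) (use x1 in auto)
    then have "assr W UNIV" unfolding W_def by (intro abs_summable_on_cmult_right)
    then show ?thesis by (simp add: abs_summable_on_def)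
  qed
  have bound: "norm (s n j) \<le> W j" for n j
  proof (cases "j \<in> {-int n..int n}")
    case True
    have g: "norm (gb x (2*n) (nat (j + int n))) \<le> C / (c * c)"
    proof -
      have "norm (gb x (2*n) (nat (j + int n))) = norm (pp x (2*n)) / (norm (pp x (nat (j + int n))) * norm (pp x (2 * n - nat (j + int n))))"
        by (simp add: gb_def norm_divide norm_mult)
      also have "\<dots> \<le> C / (c * c)"
        using C c by (intro frac_le mult_mono mult_pos_pos) (auto intro: order_trans[OF _ c(2)])
      finally show ?thesis .
    qed
    have "norm (s n j) = norm (pp x n) * norm (gb x (2*n) (nat (j + int n))) * norm (t j)"
      using True by (simp add: s_def norm_mult)
    also have "\<dots> \<le> C * (C / (c * c)) * (inverse (norm x ^ 2) * norm x ^ nat \<bar>j\<bar>)"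
      unfolding t_def
      by (intro mult_mono C(2) g theta_term_bound[OF x0 x1 zl zu]) (use C c in auto)
    also have "\<dots> = W j" by (simp add: W_def)
    finally show ?thesis .
  next
    case False
    then have "s n j = 0" unfolding s_def by auto
    moreover have "W j \<ge> 0" using C c by (simp add: W_def)
    ultimately show ?thesis by simp
  qed
  have lim: "(\<lambda>n. s n j) \<longlonglongrightarrow> t j" for j
  proof -
    have ev: "\<forall>\<^sub>F n in sequentially. pp x n * pp x (2*n) / (pp x (nat (int n + j)) * pp x (nat (int n - j))) * t j = s n j"
      unfolding eventually_sequentially
    proof (intro exI[of _ "nat \<bar>j\<bar>"] allI impI)
      fix n assume n: "nat \<bar>j\<bar> \<le> n"
      then have inr: "j \<in> {-int n..int n}" by auto
      have e1: "nat (j + int n) = nat (int n + j)" by (simp add: add.commute)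
      have e2: "2 * n - nat (int n + j) = nat (int n - j)" using n by auto
      show "pp x n * pp x (2*n) / (pp x (nat (int n + j)) * pp x (nat (int n - j))) * t j = s n j"
        using inr by (simp add: s_def gb_def e1 e2)
    qed
    have l1: "(\<lambda>n. pp x (2 * n)) \<longlonglongrightarrow> E"
      by (rule filterlim_compose[OF E(1)]) (rule filterlim_nat_shift[where K=0], simp)
    have l2: "(\<lambda>n. pp x (nat (int n + j))) \<longlonglongrightarrow> E"
      by (rule filterlim_compose[OF E(1)]) (rule filterlim_nat_shift[where K="nat \<bar>j\<bar>"], simp)
    have l3: "(\<lambda>n. pp x (nat (int n - j))) \<longlonglongrightarrow> E"
      by (rule filterlim_compose[OF E(1)]) (rule filterlim_nat_shift[where K="nat \<bar>j\<bar>"], simp)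
    have "(\<lambda>n. pp x n * pp x (2*n) / (pp x (nat (int n + j)) * pp x (nat (int n - j))) * t j) \<longlonglongrightarrow> E * E / (E * E) * t j"
      by (intro tendsto_intros E(1) l1 l2 l3) (use E(2) in simp)
    then have "(\<lambda>n. pp x n * pp x (2*n) / (pp x (nat (int n + j)) * pp x (nat (int n - j))) * t j) \<longlonglongrightarrow> t j"
      using E(2) by simp
    then show ?thesis using ev by (rule Lim_transform_eventually)
  qed
  have "(\<lambda>n. integral\<^sup>L (count_space UNIV) (s n)) \<longlonglongrightarrow> integral\<^sup>L (count_space UNIV) t"
    by (rule integral_dominated_convergence[where w = W]) (use Wi bound lim in auto)
  then show ?thesis unfolding LHS infsetsum_def t_def .
qed


lemma ass_Times:
  fixes f g :: "int \<Rightarrow> complex"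
  assumes f: "ass f UNIV" and g: "ass g UNIV"
  shows "ass (\<lambda>(i,j). f i * g j) UNIV"
proof -
  have A: "\<forall>i\<in>UNIV. ass (\<lambda>j. (\<lambda>(i,j). f i * g j) (i, j)) UNIV"
    using g by (simp add: abs_summable_on_cmult_right)
  have eq: "infsetsum (\<lambda>j. norm (f i * g j)) UNIV = norm (f i) * infsetsum (\<lambda>j. norm (g j)) UNIV" for i
    by (simp add: norm_mult infsetsum_cmult_right g)
  have "assr (\<lambda>i. norm (f i) * infsetsum (\<lambda>j. norm (g j)) UNIV) UNIV"
    using f by (intro abs_summable_on_cmult_left) simp
  then have B: "assr (\<lambda>i. infsetsum (\<lambda>j. norm ((\<lambda>(i,j). f i * g j) (i, j))) UNIV) UNIV"
    by (simp only: case_prod_conv eq)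
  have "ass (\<lambda>(i,j). f i * g j) (Sigma UNIV (\<lambda>_. UNIV))"
    using abs_summable_on_Sigma_iff[of UNIV "\<lambda>_. UNIV" "\<lambda>(i,j). f i * g j"] A B by simp
  then show ?thesis by (simp only: UNIV_Times_UNIV)
qed

lemma infsetsum_Times_mult:
  fixes f g :: "int \<Rightarrow> complex"
  assumes f: "ass f UNIV" and g: "ass g UNIV"
  shows "infsetsum f UNIV * infsetsum g UNIV = infsetsum (\<lambda>(i,j). f i * g j) UNIV"
proof -
  have "infsetsum (\<lambda>(i,j). f i * g j) (UNIV \<times> UNIV) = infsetsum (\<lambda>i. infsetsum (\<lambda>j. f i * g j) UNIV) UNIV"
    by (rule infsetsum_Times'[symmetric]) (use ass_Times[OF f g] in \<open>auto simp: UNIV_Times_UNIV\<close>)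
  also have "\<dots> = infsetsum (\<lambda>i. f i * infsetsum g UNIV) UNIV"
    by (simp add: infsetsum_cmult_right g)
  also have "\<dots> = infsetsum f UNIV * infsetsum g UNIV"
    by (simp add: infsetsum_cmult_left f)
  finally show ?thesis by (simp add: UNIV_Times_UNIV)
qed

lemma ass_theta_term:
  fixes w :: complex and e :: "int \<Rightarrow> int" and sg :: "int \<Rightarrow> complex"
  assumes w0: "w \<noteq> 0" and w1: "norm w < 1" and e: "\<And>j. \<bar>j\<bar> \<le> e j" and sg: "\<And>j. norm (sg j) = 1"
  shows "ass (\<lambda>j. sg j * w powi e j) UNIV"
proof -
  have "assr (\<lambda>j::int. norm w ^ nat \<bar>j\<bar>) UNIV" by (rule geo_int) (use w1 in auto)
  then show ?thesis
  proof (rule abs_summable_on_comparison_test)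
    fix j :: int
    have "norm (sg j * w powi e j) = norm w ^ nat (e j)"
      using e[of j] by (simp add: norm_mult sg norm_power_int power_int_def norm_power)
    also have "\<dots> \<le> norm w ^ nat \<bar>j\<bar>"
      using e[of j] w1 by (intro power_decreasing) auto
    finally show "norm (sg j * w powi e j) \<le> norm (norm w ^ nat \<bar>j\<bar>)" by simp
  qed
qed

lemma abs_le_sq: "\<bar>j::int\<bar> \<le> j^2"
proof -
  have e: "j^2 = \<bar>j\<bar> * \<bar>j\<bar>" by (simp add: power2_eq_square abs_mult_self_eq)
  show ?thesis
  proof (cases "j = 0")
    case False then have "1 \<le> \<bar>j\<bar>" by simp
    then have "\<bar>j\<bar> * 1 \<le> \<bar>j\<bar> * \<bar>j\<bar>" by (intro mult_left_mono) auto
    then show ?thesis unfolding e by simp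
  qed simp
qed

lemma ebounds:
  fixes j :: int
  shows "\<bar>j\<bar> \<le> 4 * j^2 - j" "\<bar>j\<bar> \<le> 4 * j^2 - 3 * j" "\<bar>j\<bar> \<le> 2 * j^2 - j" "\<bar>j\<bar> \<le> 2 * j^2"
  using abs_le_sq[of j] abs_ge_self[of j] abs_ge_minus_self[of j] by linarith+

lemma neg1_powi_norm: "norm ((-1::complex) powi j) = 1"
  by (simp add: norm_power_int)

lemma neg1_powi_add: "(-1::complex) powi (a + b) = (-1) powi a * (-1) powi b"
  by (rule power_int_add) simp

lemma w_powi_add: "(w::complex) \<noteq> 0 \<Longrightarrow> w powi (a + b) = w powi a * w powi b"
  by (rule power_int_add) simp

lemma pe_lemma:
  fixes w :: complex and a b :: int
  assumes w0: "w \<noteq> 0"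
  shows "((-1) powi (a + b) * w powi (2 * (a + b)^2 - (a + b))) * (1 * w powi (2 * (a - b)^2))
       = ((-1) powi a * w powi (4 * a^2 - a)) * ((-1) powi b * w powi (4 * b^2 - b))"
proof -
  have e: "2 * (a + b)^2 - (a + b) + 2 * (a - b)^2 = (4 * a^2 - a) + (4 * b^2 - b)"
    by (simp add: power2_eq_square algebra_simps)
  have "((-1) powi (a + b) * w powi (2 * (a + b)^2 - (a + b))) * (1 * w powi (2 * (a - b)^2))
      = (-1) powi (a + b) * w powi (2 * (a + b)^2 - (a + b) + 2 * (a - b)^2)"
    by (simp only: w_powi_add[OF w0] mult_1_left mult.assoc)
  also have "\<dots> = (-1) powi a * (-1) powi b * (w powi (4 * a^2 - a) * w powi (4 * b^2 - b))"
    by (simp only: e neg1_powi_add w_powi_add[OF w0])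
  also have "\<dots> = ((-1) powi a * w powi (4 * a^2 - a)) * ((-1) powi b * w powi (4 * b^2 - b))"
    by (simp only: mult_ac)
  finally show ?thesis .
qed

lemma po_lemma:
  fixes w :: complex and a b :: int
  assumes w0: "w \<noteq> 0"
  shows "((-1) powi (1 - a - b) * w powi (2 * (1 - a - b)^2 - (1 - a - b))) * (1 * w powi (2 * (a - b)^2))
       = - w * (((-1) powi a * w powi (4 * a^2 - 3 * a)) * ((-1) powi b * w powi (4 * b^2 - 3 * b)))"
proof -
  have e: "2 * (1 - a - b)^2 - (1 - a - b) + 2 * (a - b)^2 = 1 + ((4 * a^2 - 3 * a) + (4 * b^2 - 3 * b))"
    by (simp add: power2_eq_square algebra_simps)
  have s: "(-1::complex) powi (1 - a - b) = - ((-1) powi a * (-1) powi b)"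
  proof -
    have "(-1::complex) powi (1 - a - b) = (-1) powi 1 * (-1) powi (- a) * (-1) powi (- b)"
      by (simp only: diff_conv_add_uminus neg1_powi_add)
    then show ?thesis by (simp add: power_int_minus_one_minus)
  qed
  have "((-1) powi (1 - a - b) * w powi (2 * (1 - a - b)^2 - (1 - a - b))) * (1 * w powi (2 * (a - b)^2))
      = (-1) powi (1 - a - b) * w powi (2 * (1 - a - b)^2 - (1 - a - b) + 2 * (a - b)^2)"
    by (simp only: w_powi_add[OF w0] mult_1_left mult.assoc)
  also have "\<dots> = - ((-1) powi a * (-1) powi b) * (w powi 1 * (w powi (4 * a^2 - 3 * a) * w powi (4 * b^2 - 3 * b)))"
    by (simp only: e s w_powi_add[OF w0])
  also have "\<dots> = - w * (((-1) powi a * w powi (4 * a^2 - 3 * a)) * ((-1) powi b * w powi (4 * b^2 - 3 * b)))"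
    by (simp add: mult_ac)
  finally show ?thesis .
qed

lemma bije: "bij_betw (\<lambda>(a::int, b::int). (a + b, a - b)) UNIV {p :: int \<times> int. even (fst p + snd p)}"
proof (rule bij_betw_byWitness[where f' = "\<lambda>(n::int, k::int). ((n + k) div 2, (n - k) div 2)"])
  show "\<forall>a\<in>UNIV. (\<lambda>(n::int, k::int). ((n + k) div 2, (n - k) div 2)) ((\<lambda>(a::int, b::int). (a + b, a - b)) a) = a"
  proof
    fix p :: "int \<times> int" obtain a b where p: "p = (a, b)" by fastforce
    have "a + b + (a - b) = 2 * a" "a + b - (a - b) = 2 * b" by simp_all
    then show "(\<lambda>(n::int, k::int). ((n + k) div 2, (n - k) div 2)) ((\<lambda>(a::int, b::int). (a + b, a - b)) p) = p"
      unfolding p by simp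
  qed
  show "\<forall>a'\<in>{p :: int \<times> int. even (fst p + snd p)}. (\<lambda>(a::int, b::int). (a + b, a - b)) ((\<lambda>(n::int, k::int). ((n + k) div 2, (n - k) div 2)) a') = a'"
  proof
    fix p :: "int \<times> int" assume "p \<in> {p :: int \<times> int. even (fst p + snd p)}"
    moreover obtain n k where p: "p = (n, k)" by fastforce
    ultimately have ev: "even (n + k)" by simp
    obtain m where m: "n + k = 2 * m" by (rule evenE[OF ev])
    have d1: "(n + k) div 2 = m" unfolding m by simp
    have "n - k = 2 * (m - k)" using m by simp
    then have d2: "(n - k) div 2 = m - k" by simp
    show "(\<lambda>(a::int, b::int). (a + b, a - b)) ((\<lambda>(n::int, k::int). ((n + k) div 2, (n - k) div 2)) p) = p"
      unfolding p using d1 d2 m by simp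
  qed
  show "(\<lambda>(a::int, b::int). (a + b, a - b)) ` UNIV \<subseteq> {p :: int \<times> int. even (fst p + snd p)}" by auto
qed simp


lemma bijo: "bij_betw (\<lambda>(a::int, b::int). (1 - a - b, a - b)) UNIV {p :: int \<times> int. odd (fst p + snd p)}"
proof (rule bij_betw_byWitness[where f' = "\<lambda>(n::int, k::int). ((1 - n + k) div 2, (1 - n - k) div 2)"])
  show "\<forall>a\<in>UNIV. (\<lambda>(n::int, k::int). ((1 - n + k) div 2, (1 - n - k) div 2)) ((\<lambda>(a::int, b::int). (1 - a - b, a - b)) a) = a"
  proof
    fix p :: "int \<times> int" obtain a b where p: "p = (a, b)" by fastforce
    have "1 - (1 - a - b) + (a - b) = 2 * a" "1 - (1 - a - b) - (a - b) = 2 * b" by simp_all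
    then show "(\<lambda>(n::int, k::int). ((1 - n + k) div 2, (1 - n - k) div 2)) ((\<lambda>(a::int, b::int). (1 - a - b, a - b)) p) = p"
      unfolding p by simp
  qed
  show "\<forall>a'\<in>{p :: int \<times> int. odd (fst p + snd p)}. (\<lambda>(a::int, b::int). (1 - a - b, a - b)) ((\<lambda>(n::int, k::int). ((1 - n + k) div 2, (1 - n - k) div 2)) a') = a'"
  proof
    fix p :: "int \<times> int" assume "p \<in> {p :: int \<times> int. odd (fst p + snd p)}"
    moreover obtain n k where p: "p = (n, k)" by fastforce
    ultimately have ev: "odd (n + k)" by simp
    obtain m where m: "n + k = 2 * m + 1" by (rule oddE[OF ev])
    have "1 - n + k = 2 * (k - m)" using m by simp
    then have d1: "(1 - n + k) div 2 = k - m" by simp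
    have "1 - n - k = 2 * (- m)" using m by simp
    then have d2: "(1 - n - k) div 2 = - m" by simp
    show "(\<lambda>(a::int, b::int). (1 - a - b, a - b)) ((\<lambda>(n::int, k::int). ((1 - n + k) div 2, (1 - n - k) div 2)) p) = p"
      unfolding p using d1 d2 m by simp
  qed
  show "(\<lambda>(a::int, b::int). (1 - a - b, a - b)) ` UNIV \<subseteq> {p :: int \<times> int. odd (fst p + snd p)}" by auto
qed simp


lemma theta_sum_identity:
  fixes w :: complex
  assumes w0: "w \<noteq> 0" and w1: "norm w < 1"
  defines "\<alpha> \<equiv> (\<lambda>j. (-1) powi j * w powi (4 * j^2 - j))"
    and "\<beta> \<equiv> (\<lambda>j. (-1) powi j * w powi (4 * j^2 - 3 * j))"
    and "\<gamma> \<equiv> (\<lambda>j. (-1) powi j * w powi (2 * j^2 - j))"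
    and "\<phi> \<equiv> (\<lambda>j. 1 * w powi (2 * j^2))"
  shows "infsetsum \<alpha> UNIV ^ 2 - w * infsetsum \<beta> UNIV ^ 2 = infsetsum \<gamma> UNIV * infsetsum \<phi> UNIV"
proof -
  have sa: "ass \<alpha> UNIV" unfolding \<alpha>_def
    by (rule ass_theta_term[OF w0 w1]) (simp_all add: neg1_powi_norm ebounds)
  have sb: "ass \<beta> UNIV" unfolding \<beta>_def
    by (rule ass_theta_term[OF w0 w1]) (simp_all add: neg1_powi_norm ebounds)
  have sc: "ass \<gamma> UNIV" unfolding \<gamma>_def
    by (rule ass_theta_term[OF w0 w1]) (simp_all add: neg1_powi_norm ebounds)
  have sp: "ass \<phi> UNIV" unfolding \<phi>_def
    by (rule ass_theta_term[OF w0 w1]) (simp_all add: ebounds)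
  define F where "F = (\<lambda>(n::int, k::int). \<gamma> n * \<phi> k)"
  have sF: "ass F UNIV" unfolding F_def by (rule ass_Times[OF sc sp])
  define Se where "Se = {p :: int \<times> int. even (fst p + snd p)}"
  define So where "So = {p :: int \<times> int. odd (fst p + snd p)}"
  have U: "(UNIV :: (int \<times> int) set) = Se \<union> So" and D: "Se \<inter> So = {}"
    by (auto simp: Se_def So_def)
  have "infsetsum \<gamma> UNIV * infsetsum \<phi> UNIV = infsetsum F UNIV"
    unfolding F_def by (rule infsetsum_Times_mult[OF sc sp])
  also have "\<dots> = infsetsum F Se + infsetsum F So"
    unfolding U by (rule infsetsum_Un_disjoint[OF abs_summable_on_subset[OF sF] abs_summable_on_subset[OF sF] D]) auto
  finally have split: "infsetsum \<gamma> UNIV * infsetsum \<phi> UNIV = infsetsum F Se + infsetsum F So" .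
  have bije: "bij_betw (\<lambda>(a::int, b::int). (a + b, a - b)) UNIV Se"
    unfolding Se_def by (rule bije)
  have bijo: "bij_betw (\<lambda>(a::int, b::int). (1 - a - b, a - b)) UNIV So"
    unfolding So_def by (rule bijo)
  have pe: "F (a + b, a - b) = \<alpha> a * \<alpha> b" for a b
    unfolding F_def \<alpha>_def \<gamma>_def \<phi>_def case_prod_conv by (rule pe_lemma[OF w0])
  have po: "F (1 - a - b, a - b) = - w * (\<beta> a * \<beta> b)" for a b
    unfolding F_def \<beta>_def \<gamma>_def \<phi>_def case_prod_conv by (rule po_lemma[OF w0])
  have "infsetsum F Se = infsetsum (\<lambda>(a, b). \<alpha> a * \<alpha> b) UNIV"
  proof -
    have "infsetsum F Se = infsetsum (\<lambda>p. F ((\<lambda>(a::int, b::int). (a + b, a - b)) p)) UNIV"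
      by (rule infsetsum_reindex_bij_betw[OF bije, symmetric])
    also have "\<dots> = infsetsum (\<lambda>(a, b). \<alpha> a * \<alpha> b) UNIV"
      by (intro infsetsum_cong) (auto simp: pe)
    finally show ?thesis .
  qed
  also have "\<dots> = infsetsum \<alpha> UNIV ^ 2"
    by (simp add: power2_eq_square infsetsum_Times_mult[OF sa sa])
  finally have E: "infsetsum F Se = infsetsum \<alpha> UNIV ^ 2" .
  have "infsetsum F So = infsetsum (\<lambda>(a, b). - w * (\<beta> a * \<beta> b)) UNIV"
  proof -
    have "infsetsum F So = infsetsum (\<lambda>p. F ((\<lambda>(a::int, b::int). (1 - a - b, a - b)) p)) UNIV"
      by (rule infsetsum_reindex_bij_betw[OF bijo, symmetric])
    also have "\<dots> = infsetsum (\<lambda>(a, b). - w * (\<beta> a * \<beta> b)) UNIV"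
      by (intro infsetsum_cong) (auto simp: po)
    finally show ?thesis .
  qed
  also have "\<dots> = - w * infsetsum (\<lambda>(a, b). \<beta> a * \<beta> b) UNIV"
  proof -
    have "infsetsum (\<lambda>(a, b). - w * (\<beta> a * \<beta> b)) UNIV = infsetsum (\<lambda>p. - w * (case p of (a, b) \<Rightarrow> \<beta> a * \<beta> b)) UNIV"
      by (intro infsetsum_cong) auto
    also have "\<dots> = - w * infsetsum (\<lambda>(a, b). \<beta> a * \<beta> b) UNIV"
      by (rule infsetsum_cmult_right) (rule ass_Times[OF sb sb])
    finally show ?thesis .
  qed
  also have "\<dots> = - w * infsetsum \<beta> UNIV ^ 2"
    by (simp add: power2_eq_square infsetsum_Times_mult[OF sb sb])
  finally have O: "infsetsum F So = - w * infsetsum \<beta> UNIV ^ 2" .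
  show ?thesis using split E O by simp
qed


lemma theta_term_norm:
  fixes w :: complex and a b :: nat
  assumes w0: "w \<noteq> 0"
  shows "(w ^ a) powi (j^2) * (-(w powi (- int b))) powi j = (-1) powi j * w powi (int a * j^2 - int b * j)"
proof -
  have "(-(w powi (- int b))) powi j = (-1) powi j * (w powi (- int b)) powi j"
    by (metis mult_minus1 power_int_mult_distrib)
  moreover have "(w powi (- int b)) powi j = w powi (- int b * j)" by (rule power_int_mult[symmetric])
  moreover have "(w ^ a) powi (j^2) = w powi (int a * j^2)" by (simp add: power_int_power)
  moreover have "w powi (int a * j^2) * w powi (- int b * j) = w powi (int a * j^2 - int b * j)"
    using w0 by (simp add: power_int_add[symmetric])
  ultimately show ?thesis by (simp add: mult_ac)
qed

lemma exp_ge: "Suc i \<le> a * (2 * i + 1) - b" if "b < a" for a b i :: nat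
proof -
  have "(Suc b) * (2 * i + 1) \<le> a * (2 * i + 1)" using that by (intro mult_right_mono) auto
  then show ?thesis by (simp add: algebra_simps)
qed

lemma theta_prod:
  fixes w :: complex and a b :: nat
  assumes w0: "w \<noteq> 0" and w1: "norm w < 1" and b0: "0 < b" and ba: "b < a"
  shows "(\<lambda>M. \<Prod>i<M. (1 - w ^ (2 * a * Suc i)) * ((1 - w ^ (a * (2 * i + 1) - b)) * (1 - w ^ (a * (2 * i + 1) + b))))
           \<longlonglongrightarrow> infsetsum (\<lambda>j. (w ^ a) powi (j^2) * (-(w powi (- int b))) powi j) UNIV"
    and "infsetsum (\<lambda>j. (w ^ a) powi (j^2) * (-(w powi (- int b))) powi j) UNIV \<noteq> 0"
proof -
  define x where "x = w ^ a"
  define z where "z = -(w powi (- int b))"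
  define r where "r = norm w"
  have r: "0 < r" "r < 1" using w0 w1 by (auto simp: r_def)
  have x0: "x \<noteq> 0" using w0 by (simp add: x_def)
  have nx: "norm x = r ^ a" by (simp add: x_def r_def norm_power)
  have nz: "norm z = inverse (r ^ b)" by (simp add: z_def r_def norm_power_int power_int_minus norm_inverse norm_power)
  have x1: "norm x < 1" unfolding nx using r ba by (simp add: power_less_one_iff)
  have z0: "z \<noteq> 0" using w0 by (simp add: z_def)
  have zl: "norm x \<le> norm z"
  proof -
    have "r ^ a \<le> 1" using r by (simp add: power_le_one)
    moreover have "1 \<le> inverse (r ^ b)" using r by (simp add: one_le_inverse power_le_one)
    ultimately show ?thesis unfolding nx nz by linarith
  qed
  have zu: "norm z * norm x \<le> 1"
  proof -
    have "r ^ a = r ^ b * r ^ (a - b)" using ba by (simp add: power_add[symmetric])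
    moreover have "r ^ (a - b) \<le> 1" using r by (simp add: power_le_one)
    ultimately show ?thesis unfolding nx nz using r by (simp add: field_simps)
  qed
  have eqt: "(1 - x ^ (2 * Suc i)) * ((1 + z * x ^ (2 * i + 1)) * (1 + x ^ (2 * i + 1) / z))
      = (1 - w ^ (2 * a * Suc i)) * ((1 - w ^ (a * (2 * i + 1) - b)) * (1 - w ^ (a * (2 * i + 1) + b)))" for i
  proof -
    have ge: "b \<le> a * (2 * i + 1)" using exp_ge[OF ba, of i] by linarith
    have ee: "a * (2 * Suc i) = 2 * a * Suc i" by simp
    have e1: "x ^ (2 * Suc i) = w ^ (2 * a * Suc i)" unfolding x_def power_mult[symmetric] ee ..
    have e2: "z * x ^ (2 * i + 1) = - (w ^ (a * (2 * i + 1) - b))"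
    proof -
      have "z * x ^ (2 * i + 1) = - (w powi (- int b) * w powi int (a * (2 * i + 1)))"
      proof -
        have xx: "x ^ (2*i+1) = w powi int (a * (2*i+1))" unfolding x_def power_mult[symmetric] power_int_of_nat ..
        show ?thesis unfolding z_def xx by (simp only: mult_minus_left)
      qed
      also have "w powi (- int b) * w powi int (a * (2 * i + 1)) = w powi int (a * (2 * i + 1) - b)"
        using ge w0 by (simp add: power_int_add[symmetric] of_nat_diff del: power_int_of_nat)
      finally show ?thesis by simp
    qed
    have e3: "x ^ (2 * i + 1) / z = - (w ^ (a * (2 * i + 1) + b))"
      using w0 by (simp add: z_def x_def power_int_minus power_mult[symmetric] power_add divide_inverse)
    show ?thesis unfolding e1 e2 e3 by simp
  qed
  have L: "(\<lambda>M. \<Prod>i<M. (1 - w ^ (2 * a * Suc i)) * ((1 - w ^ (a * (2 * i + 1) - b)) * (1 - w ^ (a * (2 * i + 1) + b))))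
           \<longlonglongrightarrow> infsetsum (\<lambda>j. x powi (j^2) * z powi j) UNIV"
    using jtp[OF x0 x1 z0 zl zu] unfolding eqt .
  then show "(\<lambda>M. \<Prod>i<M. (1 - w ^ (2 * a * Suc i)) * ((1 - w ^ (a * (2 * i + 1) - b)) * (1 - w ^ (a * (2 * i + 1) + b))))
           \<longlonglongrightarrow> infsetsum (\<lambda>j. (w ^ a) powi (j^2) * (-(w powi (- int b))) powi j) UNIV"
    by (simp add: x_def z_def)
  have "\<exists>L. (\<lambda>M. \<Prod>m<M. (1 - w ^ (2 * a * Suc m))) \<longlonglongrightarrow> L \<and> L \<noteq> 0"
  proof (rule prod_conv_nz[OF w1])
    fix m :: nat
    have "1 * Suc m \<le> (2 * a) * Suc m" using ba by (intro mult_le_mono1) auto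
    then show "Suc m \<le> 2 * a * Suc m" by simp
  qed
  then obtain L1 where L1: "(\<lambda>M. \<Prod>m<M. (1 - w ^ (2 * a * Suc m))) \<longlonglongrightarrow> L1" "L1 \<noteq> 0" by blast
  have "\<exists>L. (\<lambda>M. \<Prod>m<M. (1 - w ^ (a * (2 * m + 1) - b))) \<longlonglongrightarrow> L \<and> L \<noteq> 0"
    by (rule prod_conv_nz[OF w1]) (rule exp_ge[OF ba])
  then obtain L2 where L2: "(\<lambda>M. \<Prod>m<M. (1 - w ^ (a * (2 * m + 1) - b))) \<longlonglongrightarrow> L2" "L2 \<noteq> 0" by blast
  have "\<exists>L. (\<lambda>M. \<Prod>m<M. (1 - w ^ (a * (2 * m + 1) + b))) \<longlonglongrightarrow> L \<and> L \<noteq> 0"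
  proof (rule prod_conv_nz[OF w1])
    fix m :: nat
    show "Suc m \<le> a * (2 * m + 1) + b" using exp_ge[OF ba, of m] by linarith
  qed
  then obtain L3 where L3: "(\<lambda>M. \<Prod>m<M. (1 - w ^ (a * (2 * m + 1) + b))) \<longlonglongrightarrow> L3" "L3 \<noteq> 0" by blast
  have "(\<lambda>M. (\<Prod>m<M. (1 - w ^ (2 * a * Suc m))) * ((\<Prod>m<M. (1 - w ^ (a * (2 * m + 1) - b))) * (\<Prod>m<M. (1 - w ^ (a * (2 * m + 1) + b)))))
       \<longlonglongrightarrow> L1 * (L2 * L3)"
    by (intro tendsto_mult L1(1) L2(1) L3(1))
  then have "(\<lambda>M. \<Prod>i<M. (1 - w ^ (2 * a * Suc i)) * ((1 - w ^ (a * (2 * i + 1) - b)) * (1 - w ^ (a * (2 * i + 1) + b))))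
       \<longlonglongrightarrow> L1 * (L2 * L3)"
    by (simp only: prod.distrib)
  from LIMSEQ_unique[OF L this] L1(2) L2(2) L3(2)
  show "infsetsum (\<lambda>j. (w ^ a) powi (j^2) * (-(w powi (- int b))) powi j) UNIV \<noteq> 0"
    by (simp add: x_def z_def)
qed


definition thA :: "complex \<Rightarrow> complex" where
  "thA w = infsetsum (\<lambda>j. (-1) powi j * w powi (4 * j^2 - 3 * j)) UNIV"
definition thB :: "complex \<Rightarrow> complex" where
  "thB w = infsetsum (\<lambda>j. (-1) powi j * w powi (4 * j^2 - j)) UNIV"
definition thC :: "complex \<Rightarrow> complex" where
  "thC w = infsetsum (\<lambda>j. (-1) powi j * w powi (2 * j^2 - j)) UNIV"
definition thF :: "complex \<Rightarrow> complex" where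
  "thF w = infsetsum (\<lambda>j. 1 * w powi (2 * j^2)) UNIV"

lemma thA_prod:
  assumes w0: "w \<noteq> 0" and w1: "norm w < 1"
  shows "(\<lambda>M. \<Prod>i<M. (1 - w ^ (8 * i + 8)) * ((1 - w ^ (8 * i + 1)) * (1 - w ^ (8 * i + 7)))) \<longlonglongrightarrow> thA w"
    and "thA w \<noteq> 0"
proof -
  have s: "infsetsum (\<lambda>j. (w ^ 4) powi (j^2) * (-(w powi (- int 3))) powi j) UNIV = thA w"
    unfolding thA_def by (intro infsetsum_cong) (simp_all add: theta_term_norm[OF w0, of 4 _ 3, simplified])
  have e: "(\<Prod>i<M. (1 - w ^ (2 * 4 * Suc i)) * ((1 - w ^ (4 * (2 * i + 1) - 3)) * (1 - w ^ (4 * (2 * i + 1) + 3))))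
         = (\<Prod>i<M. (1 - w ^ (8 * i + 8)) * ((1 - w ^ (8 * i + 1)) * (1 - w ^ (8 * i + 7))))" for M
  proof (intro prod.cong refl)
    fix i
    have "2 * 4 * Suc i = 8 * i + 8" "4 * (2 * i + 1) - 3 = 8 * i + 1" "4 * (2 * i + 1) + 3 = 8 * i + 7" by simp_all
    then show "(1 - w ^ (2 * 4 * Suc i)) * ((1 - w ^ (4 * (2 * i + 1) - 3)) * (1 - w ^ (4 * (2 * i + 1) + 3)))
       = (1 - w ^ (8 * i + 8)) * ((1 - w ^ (8 * i + 1)) * (1 - w ^ (8 * i + 7)))" by (simp only:)
  qed
  show "(\<lambda>M. \<Prod>i<M. (1 - w ^ (8 * i + 8)) * ((1 - w ^ (8 * i + 1)) * (1 - w ^ (8 * i + 7)))) \<longlonglongrightarrow> thA w"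
    using theta_prod(1)[OF w0 w1, of 3 4] unfolding s e by simp
  show "thA w \<noteq> 0" using theta_prod(2)[OF w0 w1, of 3 4] unfolding s by simp
qed

lemma thB_prod:
  assumes w0: "w \<noteq> 0" and w1: "norm w < 1"
  shows "(\<lambda>M. \<Prod>i<M. (1 - w ^ (8 * i + 8)) * ((1 - w ^ (8 * i + 3)) * (1 - w ^ (8 * i + 5)))) \<longlonglongrightarrow> thB w"
    and "thB w \<noteq> 0"
proof -
  have s: "infsetsum (\<lambda>j. (w ^ 4) powi (j^2) * (-(w powi (- int 1))) powi j) UNIV = thB w"
    unfolding thB_def by (intro infsetsum_cong) (simp_all add: theta_term_norm[OF w0, of 4 _ 1, simplified])
  have e: "(\<Prod>i<M. (1 - w ^ (2 * 4 * Suc i)) * ((1 - w ^ (4 * (2 * i + 1) - 1)) * (1 - w ^ (4 * (2 * i + 1) + 1))))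
         = (\<Prod>i<M. (1 - w ^ (8 * i + 8)) * ((1 - w ^ (8 * i + 3)) * (1 - w ^ (8 * i + 5))))" for M
  proof (intro prod.cong refl)
    fix i
    have "2 * 4 * Suc i = 8 * i + 8" "4 * (2 * i + 1) - 1 = 8 * i + 3" "4 * (2 * i + 1) + 1 = 8 * i + 5" by simp_all
    then show "(1 - w ^ (2 * 4 * Suc i)) * ((1 - w ^ (4 * (2 * i + 1) - 1)) * (1 - w ^ (4 * (2 * i + 1) + 1)))
       = (1 - w ^ (8 * i + 8)) * ((1 - w ^ (8 * i + 3)) * (1 - w ^ (8 * i + 5)))" by (simp only:)
  qed
  show "(\<lambda>M. \<Prod>i<M. (1 - w ^ (8 * i + 8)) * ((1 - w ^ (8 * i + 3)) * (1 - w ^ (8 * i + 5)))) \<longlonglongrightarrow> thB w"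
    using theta_prod(1)[OF w0 w1, of 1 4] unfolding s e by simp
  show "thB w \<noteq> 0" using theta_prod(2)[OF w0 w1, of 1 4] unfolding s by simp
qed

lemma thC_prod:
  assumes w0: "w \<noteq> 0" and w1: "norm w < 1"
  shows "(\<lambda>M. \<Prod>i<M. (1 - w ^ (4 * i + 4)) * ((1 - w ^ (4 * i + 1)) * (1 - w ^ (4 * i + 3)))) \<longlonglongrightarrow> thC w"
proof -
  have s: "infsetsum (\<lambda>j. (w ^ 2) powi (j^2) * (-(w powi (- int 1))) powi j) UNIV = thC w"
    unfolding thC_def by (intro infsetsum_cong) (simp_all add: theta_term_norm[OF w0, of 2 _ 1, simplified])
  have e: "(\<Prod>i<M. (1 - w ^ (2 * 2 * Suc i)) * ((1 - w ^ (2 * (2 * i + 1) - 1)) * (1 - w ^ (2 * (2 * i + 1) + 1))))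
         = (\<Prod>i<M. (1 - w ^ (4 * i + 4)) * ((1 - w ^ (4 * i + 1)) * (1 - w ^ (4 * i + 3))))" for M
  proof (intro prod.cong refl)
    fix i
    have "2 * 2 * Suc i = 4 * i + 4" "2 * (2 * i + 1) - 1 = 4 * i + 1" "2 * (2 * i + 1) + 1 = 4 * i + 3" by simp_all
    then show "(1 - w ^ (2 * 2 * Suc i)) * ((1 - w ^ (2 * (2 * i + 1) - 1)) * (1 - w ^ (2 * (2 * i + 1) + 1)))
       = (1 - w ^ (4 * i + 4)) * ((1 - w ^ (4 * i + 1)) * (1 - w ^ (4 * i + 3)))" by (simp only:)
  qed
  show ?thesis
    using theta_prod(1)[OF w0 w1, of 1 2] unfolding s e by simp
qed


definition fk :: "complex \<Rightarrow> nat \<Rightarrow> complex" where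
  "fk w n = (1 - w ^ Suc n) powi kronecker8 (Suc n)"

definition Pf :: "complex \<Rightarrow> complex" where
  "Pf w = (\<Prod>n. fk w n)"

lemma v_fun_Pf: "v_fun \<tau> = exp (pi * \<i> * \<tau>) * Pf (nome \<tau>)"
  by (simp add: v_fun_def Pf_def fk_def)

lemma fk_conv:
  fixes w :: complex
  assumes w1: "norm w < 1"
  shows "convergent_prod (fk w)"
proof -
  define r where "r = norm w"
  have r: "0 \<le> r" "r < 1" using w1 by (auto simp: r_def)
  have bound: "norm (fk w n - 1) \<le> r ^ Suc n / (1 - r)" for n
  proof -
    define u where "u = w ^ Suc n"
    have nu: "norm u = r ^ Suc n" unfolding u_def r_def by (rule norm_power)
    have nur: "norm u \<le> r" unfolding nu using r by (intro power_le_one_iff[THEN iffD2] order_trans[OF power_decreasing[of 1 "Suc n" r]]) auto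
    have d: "1 - r \<le> norm (1 - u)"
      using norm_triangle_ineq2[of 1 u] nur by (simp add: norm_minus_commute)
    have d0: "0 < 1 - r" using r by simp
    have base: "r ^ Suc n \<le> r ^ Suc n / (1 - r)"
      using r by (simp add: le_divide_eq mult_left_le)
    have "kronecker8 (Suc n) = 1 \<or> kronecker8 (Suc n) = 0 \<or> kronecker8 (Suc n) = -1"
      by (simp add: kronecker8_def)
    then consider "kronecker8 (Suc n) = 1" | "kronecker8 (Suc n) = 0" | "kronecker8 (Suc n) = -1" by blast
    then show ?thesis
    proof cases
      case 1
      then have "fk w n = 1 - u" by (simp add: fk_def u_def)
      then have "norm (fk w n - 1) = norm u" by simp
      then show ?thesis using base nu by simp
    next
      case 2
      then show ?thesis using r by (simp add: fk_def)
    next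
      case 3
      have u1: "1 - u \<noteq> 0" using d d0 by auto
      have "fk w n = inverse (1 - u)" using 3 by (simp add: fk_def u_def power_int_minus)
      then have "fk w n - 1 = u / (1 - u)" using u1 by (simp add: field_simps)
      then have "norm (fk w n - 1) = r ^ Suc n / norm (1 - u)" by (simp add: norm_divide nu)
      also have "\<dots> \<le> r ^ Suc n / (1 - r)" using d d0 r by (intro divide_left_mono mult_pos_pos) auto
      finally show ?thesis .
    qed
  qed
  have "summable (\<lambda>n. r ^ Suc n / (1 - r))"
    using r by (intro summable_divide summable_mult summable_geometric) (simp_all add: power_Suc)
  then have "summable (\<lambda>n. norm (fk w n - 1))"
    by (rule summable_comparison_test[rotated]) (use bound in auto)
  then show ?thesis by (intro abs_convergent_prod_imp_convergent_prod summable_imp_abs_convergent_prod)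
qed

lemma Pf_lim:
  assumes w1: "norm w < 1"
  shows "(\<lambda>N. \<Prod>n<N. fk w n) \<longlonglongrightarrow> Pf w"
proof -
  have "(\<lambda>n. \<Prod>i\<le>n. fk w i) \<longlonglongrightarrow> Pf w" unfolding Pf_def by (rule convergent_prod_LIMSEQ[OF fk_conv[OF w1]])
  then have "(\<lambda>n. \<Prod>i<Suc n. fk w i) \<longlonglongrightarrow> Pf w" by (simp add: lessThan_Suc_atMost)
  then show ?thesis using filterlim_sequentially_Suc[of "\<lambda>n. \<Prod>i<n. fk w i"] by simp
qed


lemma prod8: "(\<Prod>r<8. g r) = g 0 * g 1 * g 2 * g 3 * g 4 * g 5 * g 6 * g (7::nat)" for g :: "nat \<Rightarrow> complex"
  by (simp add: eval_nat_numeral mult_ac)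

lemma k8_shift: "kronecker8 (8 * M + r) = kronecker8 r"
  by (simp add: kronecker8_def)

lemma prod_lessThan_add: "(\<Prod>n<m + k. f n) = (\<Prod>n<m. f n) * (\<Prod>r<k. f (m + r))" for f :: "nat \<Rightarrow> complex"
  by (induction k) (simp_all add: mult_ac)

lemma fk_shift: "fk w (8 * M + r) = (1 - w ^ (8 * M + Suc r)) powi kronecker8 (Suc r)"
proof -
  have "Suc (8 * M + r) = 8 * M + Suc r" by simp
  then show ?thesis unfolding fk_def by (simp only: k8_shift)
qed

lemma gb_aux: "a3 \<noteq> 0 \<Longrightarrow> a5 \<noteq> 0 \<Longrightarrow> a1 * inverse a3 * inverse a5 * a7 * (a8 * (a3 * a5)) = a8 * (a1 * a7)"
  for a1 a3 a5 a7 a8 :: complex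
  by (simp add: field_simps)

lemma block8:
  fixes w :: complex
  assumes w1: "norm w < 1"
  shows "(\<Prod>n<8*M. fk w n) * (\<Prod>i<M. (1 - w ^ (8 * i + 8)) * ((1 - w ^ (8 * i + 3)) * (1 - w ^ (8 * i + 5))))
       = (\<Prod>i<M. (1 - w ^ (8 * i + 8)) * ((1 - w ^ (8 * i + 1)) * (1 - w ^ (8 * i + 7))))"
proof (induction M)
  case 0 then show ?case by simp
next
  case (Suc M)
  have nz3: "1 - w ^ (8 * M + 3) \<noteq> 0" by (rule pow_factor_nz[OF w1]) simp
  have nz5: "1 - w ^ (8 * M + 5) \<noteq> 0" by (rule pow_factor_nz[OF w1]) simp
  have G: "(\<Prod>r<8. fk w (8 * M + r)) = (1 - w ^ (8 * M + 1)) * inverse (1 - w ^ (8 * M + 3)) * inverse (1 - w ^ (8 * M + 5)) * (1 - w ^ (8 * M + 7))"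
    unfolding prod8 fk_shift by (simp add: kronecker8_def power_int_minus)
  define G8 where "G8 = (\<Prod>r<8. fk w (8 * M + r))"
  have Gb: "G8 * ((1 - w ^ (8 * M + 8)) * ((1 - w ^ (8 * M + 3)) * (1 - w ^ (8 * M + 5))))
      = (1 - w ^ (8 * M + 8)) * ((1 - w ^ (8 * M + 1)) * (1 - w ^ (8 * M + 7)))"
    unfolding G8_def G by (rule gb_aux[OF nz3 nz5])
  have "(\<Prod>n<8 * Suc M. fk w n) = (\<Prod>n<8 * M. fk w n) * G8"
  proof -
    have "8 * Suc M = 8 * M + 8" by simp
    then show ?thesis unfolding G8_def by (simp only: prod_lessThan_add)
  qed
  then have "(\<Prod>n<8 * Suc M. fk w n) * (\<Prod>i<Suc M. (1 - w ^ (8 * i + 8)) * ((1 - w ^ (8 * i + 3)) * (1 - w ^ (8 * i + 5))))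
      = ((\<Prod>n<8 * M. fk w n) * (\<Prod>i<M. (1 - w ^ (8 * i + 8)) * ((1 - w ^ (8 * i + 3)) * (1 - w ^ (8 * i + 5)))))
        * (G8 * ((1 - w ^ (8 * M + 8)) * ((1 - w ^ (8 * M + 3)) * (1 - w ^ (8 * M + 5)))))"
    by (simp only: prod.lessThan_Suc mult_ac)
  also have "\<dots> = (\<Prod>i<Suc M. (1 - w ^ (8 * i + 8)) * ((1 - w ^ (8 * i + 1)) * (1 - w ^ (8 * i + 7))))"
    unfolding Suc.IH Gb by (simp only: prod.lessThan_Suc)
  finally show ?case .
qed

lemma block4:
  fixes w :: complex
  shows "(\<Prod>i<2*M. (1 - w ^ (4 * i + 4)) * ((1 - w ^ (4 * i + 1)) * (1 - w ^ (4 * i + 3)))) * (\<Prod>i<M. 1 - w ^ (8 * i + 8))^2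
       = (\<Prod>i<M. (1 - w ^ (8 * i + 8)) * ((1 - w ^ (8 * i + 1)) * (1 - w ^ (8 * i + 7))))
         * (\<Prod>i<M. (1 - w ^ (8 * i + 8)) * ((1 - w ^ (8 * i + 3)) * (1 - w ^ (8 * i + 5))))
         * (\<Prod>i<2*M. 1 - w ^ (4 * i + 4))"
proof (induction M)
  case 0 then show ?case by simp
next
  case (Suc M)
  have e: "2 * Suc M = Suc (Suc (2 * M))" "4 * (2 * M) + 4 = 8 * M + 4" "4 * (2 * M) + 1 = 8 * M + 1"
     "4 * (2 * M) + 3 = 8 * M + 3" "4 * Suc (2 * M) + 4 = 8 * M + 8" "4 * Suc (2 * M) + 1 = 8 * M + 5"
     "4 * Suc (2 * M) + 3 = 8 * M + 7" by simp_all
  define X where "X = (\<Prod>i<2*M. (1 - w ^ (4 * i + 4)) * ((1 - w ^ (4 * i + 1)) * (1 - w ^ (4 * i + 3))))"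
  define Y where "Y = (\<Prod>i<M. 1 - w ^ (8 * i + 8))"
  define A where "A = (\<Prod>i<M. (1 - w ^ (8 * i + 8)) * ((1 - w ^ (8 * i + 1)) * (1 - w ^ (8 * i + 7))))"
  define B where "B = (\<Prod>i<M. (1 - w ^ (8 * i + 8)) * ((1 - w ^ (8 * i + 3)) * (1 - w ^ (8 * i + 5))))"
  define Z where "Z = (\<Prod>i<2*M. 1 - w ^ (4 * i + 4))"
  have IH: "X * Y^2 = A * B * Z" using Suc.IH unfolding X_def Y_def A_def B_def Z_def .
  have L: "(\<Prod>i<2*Suc M. (1 - w ^ (4 * i + 4)) * ((1 - w ^ (4 * i + 1)) * (1 - w ^ (4 * i + 3)))) * (\<Prod>i<Suc M. 1 - w ^ (8 * i + 8))^2
     = (X * Y^2) * ((1 - w ^ (8 * M + 4)) * ((1 - w ^ (8 * M + 1)) * (1 - w ^ (8 * M + 3))) * ((1 - w ^ (8 * M + 8)) * ((1 - w ^ (8 * M + 5)) * (1 - w ^ (8 * M + 7)))) * (1 - w ^ (8 * M + 8))^2)"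
    unfolding X_def Y_def e(1) prod.lessThan_Suc e(2-7) by (simp only: mult_ac power_mult_distrib)
  have R: "(\<Prod>i<Suc M. (1 - w ^ (8 * i + 8)) * ((1 - w ^ (8 * i + 1)) * (1 - w ^ (8 * i + 7))))
         * (\<Prod>i<Suc M. (1 - w ^ (8 * i + 8)) * ((1 - w ^ (8 * i + 3)) * (1 - w ^ (8 * i + 5))))
         * (\<Prod>i<2*Suc M. 1 - w ^ (4 * i + 4))
     = (A * B * Z) * ((1 - w ^ (8 * M + 8)) * ((1 - w ^ (8 * M + 1)) * (1 - w ^ (8 * M + 7))) * ((1 - w ^ (8 * M + 8)) * ((1 - w ^ (8 * M + 3)) * (1 - w ^ (8 * M + 5)))) * ((1 - w ^ (8 * M + 4)) * (1 - w ^ (8 * M + 8))))"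
    unfolding A_def B_def Z_def e(1) prod.lessThan_Suc e(2-7) by (simp only: mult_ac)
  have F: "(1 - w ^ (8 * M + 4)) * ((1 - w ^ (8 * M + 1)) * (1 - w ^ (8 * M + 3))) * ((1 - w ^ (8 * M + 8)) * ((1 - w ^ (8 * M + 5)) * (1 - w ^ (8 * M + 7)))) * (1 - w ^ (8 * M + 8))^2
      = (1 - w ^ (8 * M + 8)) * ((1 - w ^ (8 * M + 1)) * (1 - w ^ (8 * M + 7))) * ((1 - w ^ (8 * M + 8)) * ((1 - w ^ (8 * M + 3)) * (1 - w ^ (8 * M + 5)))) * ((1 - w ^ (8 * M + 4)) * (1 - w ^ (8 * M + 8)))"
    by (simp only: mult_ac power2_eq_square)
  show ?case unfolding L R IH F ..
qed


definition E4 :: "complex \<Rightarrow> complex" where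
  "E4 w = lim (\<lambda>M. \<Prod>i<M. 1 - w ^ (4 * i + 4))"
definition E8 :: "complex \<Rightarrow> complex" where
  "E8 w = lim (\<lambda>M. \<Prod>i<M. 1 - w ^ (8 * i + 8))"

lemma E4_lim:
  assumes w1: "norm w < 1"
  shows "(\<lambda>M. \<Prod>i<M. 1 - w ^ (4 * i + 4)) \<longlonglongrightarrow> E4 w" "E4 w \<noteq> 0"
proof -
  have "\<exists>L. (\<lambda>M. \<Prod>m<M. (1 - w ^ (4 * m + 4))) \<longlonglongrightarrow> L \<and> L \<noteq> 0"
    by (rule prod_conv_nz[OF w1]) simp
  then obtain L where L: "(\<lambda>M. \<Prod>m<M. (1 - w ^ (4 * m + 4))) \<longlonglongrightarrow> L" "L \<noteq> 0" by blast
  have "E4 w = L" unfolding E4_def by (rule limI[OF L(1)])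
  then show "(\<lambda>M. \<Prod>i<M. 1 - w ^ (4 * i + 4)) \<longlonglongrightarrow> E4 w" "E4 w \<noteq> 0" using L by simp_all
qed

lemma E8_lim:
  assumes w1: "norm w < 1"
  shows "(\<lambda>M. \<Prod>i<M. 1 - w ^ (8 * i + 8)) \<longlonglongrightarrow> E8 w" "E8 w \<noteq> 0"
proof -
  have "\<exists>L. (\<lambda>M. \<Prod>m<M. (1 - w ^ (8 * m + 8))) \<longlonglongrightarrow> L \<and> L \<noteq> 0"
    by (rule prod_conv_nz[OF w1]) simp
  then obtain L where L: "(\<lambda>M. \<Prod>m<M. (1 - w ^ (8 * m + 8))) \<longlonglongrightarrow> L" "L \<noteq> 0" by blast
  have "E8 w = L" unfolding E8_def by (rule limI[OF L(1)])
  then show "(\<lambda>M. \<Prod>i<M. 1 - w ^ (8 * i + 8)) \<longlonglongrightarrow> E8 w" "E8 w \<noteq> 0" using L by simp_all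
qed

lemma E4_even: "E4 (-w) = E4 w"
proof -
  have "(-w) ^ (4 * i + 4) = w ^ (4 * i + 4)" for i
    by (rule power_minus_even) simp
  then show ?thesis unfolding E4_def by simp
qed

lemma E8_even: "E8 (-w) = E8 w"
proof -
  have "(-w) ^ (8 * i + 8) = w ^ (8 * i + 8)" for i
    by (rule power_minus_even) simp
  then show ?thesis unfolding E8_def by simp
qed

lemma thF_even: "thF (-w) = thF w"
proof -
  have "(-w) powi (2 * j^2) = w powi (2 * j^2)" for j :: int
    by (rule power_int_minus_left_even) simp
  then show ?thesis unfolding thF_def by simp
qed

lemma subseq_lim:
  fixes X :: "nat \<Rightarrow> complex"
  assumes "X \<longlonglongrightarrow> L" "0 < k"
  shows "(\<lambda>M. X (k * M)) \<longlonglongrightarrow> L"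
proof -
  have "strict_mono (\<lambda>M::nat. k * M)" using assms(2) by (intro strict_monoI) simp
  from LIMSEQ_subseq_LIMSEQ[OF assms(1) this] show ?thesis by (simp add: o_def)
qed

lemma Pf_eq:
  assumes w0: "w \<noteq> 0" and w1: "norm w < 1"
  shows "Pf w * thB w = thA w"
proof -
  have l1: "(\<lambda>M. \<Prod>n<8*M. fk w n) \<longlonglongrightarrow> Pf w"
    by (rule subseq_lim[OF Pf_lim[OF w1]]) simp
  have "(\<lambda>M. (\<Prod>n<8*M. fk w n) * (\<Prod>i<M. (1 - w ^ (8 * i + 8)) * ((1 - w ^ (8 * i + 3)) * (1 - w ^ (8 * i + 5)))))
      \<longlonglongrightarrow> Pf w * thB w"
    by (intro tendsto_mult l1 thB_prod(1)[OF w0 w1])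
  then have "(\<lambda>M. \<Prod>i<M. (1 - w ^ (8 * i + 8)) * ((1 - w ^ (8 * i + 1)) * (1 - w ^ (8 * i + 7))))
      \<longlonglongrightarrow> Pf w * thB w"
    by (simp only: block8[OF w1])
  from LIMSEQ_unique[OF this thA_prod(1)[OF w0 w1]] show ?thesis .
qed

lemma C_eq:
  assumes w0: "w \<noteq> 0" and w1: "norm w < 1"
  shows "thC w * E8 w ^ 2 = thA w * thB w * E4 w"
proof -
  have "(\<lambda>M. (\<Prod>i<2*M. (1 - w ^ (4 * i + 4)) * ((1 - w ^ (4 * i + 1)) * (1 - w ^ (4 * i + 3)))) * (\<Prod>i<M. 1 - w ^ (8 * i + 8))^2)
      \<longlonglongrightarrow> thC w * E8 w ^ 2"
    by (intro tendsto_mult tendsto_power E8_lim(1)[OF w1] subseq_lim[OF thC_prod[OF w0 w1]]) simp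
  then have "(\<lambda>M. (\<Prod>i<M. (1 - w ^ (8 * i + 8)) * ((1 - w ^ (8 * i + 1)) * (1 - w ^ (8 * i + 7))))
         * (\<Prod>i<M. (1 - w ^ (8 * i + 8)) * ((1 - w ^ (8 * i + 3)) * (1 - w ^ (8 * i + 5))))
         * (\<Prod>i<2*M. 1 - w ^ (4 * i + 4))) \<longlonglongrightarrow> thC w * E8 w ^ 2"
    by (simp only: block4)
  moreover have "(\<lambda>M. (\<Prod>i<M. (1 - w ^ (8 * i + 8)) * ((1 - w ^ (8 * i + 1)) * (1 - w ^ (8 * i + 7))))
         * (\<Prod>i<M. (1 - w ^ (8 * i + 8)) * ((1 - w ^ (8 * i + 3)) * (1 - w ^ (8 * i + 5))))
         * (\<Prod>i<2*M. 1 - w ^ (4 * i + 4))) \<longlonglongrightarrow> thA w * thB w * E4 w"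
    by (intro tendsto_mult thA_prod(1)[OF w0 w1] thB_prod(1)[OF w0 w1] subseq_lim[OF E4_lim(1)[OF w1]]) simp
  ultimately show ?thesis by (rule LIMSEQ_unique)
qed

lemma key:
  assumes w0: "w \<noteq> 0" and w1: "norm w < 1"
  shows "Pf w \<noteq> 0" "1 / Pf w - w * Pf w = thF w * E4 w / E8 w ^ 2"
proof -
  have A: "thA w \<noteq> 0" by (rule thA_prod(2)[OF w0 w1])
  have B: "thB w \<noteq> 0" by (rule thB_prod(2)[OF w0 w1])
  have E: "E8 w \<noteq> 0" by (rule E8_lim(2)[OF w1])
  have P: "Pf w = thA w / thB w" using Pf_eq[OF w0 w1] B by (simp add: field_simps)
  show "Pf w \<noteq> 0" unfolding P using A B by simp
  have S: "thB w ^ 2 - w * thA w ^ 2 = thC w * thF w"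
    unfolding thA_def thB_def thC_def thF_def by (rule theta_sum_identity[OF w0 w1])
  have C: "thC w = thA w * thB w * E4 w / E8 w ^ 2" using C_eq[OF w0 w1] E by (simp add: field_simps)
  have "1 / Pf w - w * Pf w = (thB w ^ 2 - w * thA w ^ 2) / (thA w * thB w)"
    unfolding P using A B by (simp add: field_simps power2_eq_square)
  also have "\<dots> = thF w * E4 w / E8 w ^ 2"
    unfolding S C using A B E by (simp add: field_simps)
  finally show "1 / Pf w - w * Pf w = thF w * E4 w / E8 w ^ 2" .
qed


lemma kron_even: "even m \<Longrightarrow> kronecker8 m = 0"
proof -
  assume "even m"
  then obtain k where k: "m = 2 * k" by (rule evenE)
  have "m mod 8 = 2 * (k mod 4)" unfolding k by (simp add: mult_mod_right)
  moreover have "k mod 4 < 4" by simp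
  ultimately have "m mod 8 \<in> {0, 2, 4, 6}" by auto
  then show ?thesis by (auto simp: kronecker8_def)
qed

lemma fk_mult: "fk q n * fk (-q) n = fk (q^2) n"
proof (cases "even (Suc n)")
  case True
  then show ?thesis by (simp add: fk_def kron_even)
next
  case False
  then have m: "(-q) ^ Suc n = - (q ^ Suc n)" by (simp add: power_minus_odd)
  have "fk q n * fk (-q) n = ((1 - q ^ Suc n) * (1 - (-q) ^ Suc n)) powi kronecker8 (Suc n)"
    unfolding fk_def by (rule power_int_mult_distrib[symmetric])
  also have "(1 - q ^ Suc n) * (1 - (-q) ^ Suc n) = 1 - (q^2) ^ Suc n"
  proof -
    have "(1 - q ^ Suc n) * (1 - - (q ^ Suc n)) = 1 - q ^ Suc n * q ^ Suc n" by (simp add: algebra_simps)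
    also have "q ^ Suc n * q ^ Suc n = (q^2) ^ Suc n" by (simp only: power_mult_distrib[symmetric] power2_eq_square)
    finally show ?thesis unfolding m .
  qed
  finally show ?thesis by (simp add: fk_def)
qed

lemma Pf_mult:
  assumes "norm q < 1"
  shows "Pf q * Pf (-q) = Pf (q^2)"
proof -
  have "Pf q * Pf (-q) = (\<Prod>n. fk q n * fk (-q) n)"
    unfolding Pf_def by (rule prodinf_mult) (use fk_conv assms in auto)
  then show ?thesis by (simp add: fk_mult Pf_def)
qed

lemma final_alg:
  fixes q a b :: complex
  assumes a: "a \<noteq> 0" and b: "b \<noteq> 0" and h: "1 / a - q * a = 1 / b + q * b"
  shows "(let x = q * a^2; y = q^2 * (a * b)^2 in y^2 - (x^2 - 4*x + 1) * y + x^2 = 0)"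
proof -
  have D: "q * a * b * (a + b) - (b - a) = 0"
  proof -
    have "q * a * b * (a + b) - (b - a) = -(a * b) * ((1 / a - q * a) - (1 / b + q * b))"
      using a b by (simp add: field_simps)
    then show ?thesis using h by simp
  qed
  have "(q^2 * (a * b)^2)^2 - ((q * a^2)^2 - 4 * (q * a^2) + 1) * (q^2 * (a * b)^2) + (q * a^2)^2
      = q^2 * a^2 * (q * a * b * (a + b) - (b - a)) * (q * a * b * (b - a) + a + b)"
    by (simp add: algebra_simps power2_eq_square)
  then show ?thesis using D by (simp add: Let_def)
qed


theorem proposition2:
  fixes \<tau> :: complex
  assumes "Im \<tau> > 0"
  shows "(let x = (v_fun \<tau>)^2; y = (v_fun (2 * \<tau>))^2
          in y^2 - (x^2 - 4*x + 1) * y + x^2 = 0)"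
proof -
  define q where "q = nome \<tau>"
  have q0: "q \<noteq> 0" by (simp add: q_def nome_def)
  have q1: "norm q < 1"
  proof -
    have "norm q = exp (Re (2 * pi * \<i> * \<tau>))" by (simp add: q_def nome_def)
    also have "Re (2 * pi * \<i> * \<tau>) = - (2 * pi * Im \<tau>)" by simp
    also have "exp (- (2 * pi * Im \<tau>)) < 1" using assms pi_gt_zero by simp
    finally show ?thesis .
  qed
  have eq: "exp (pi * \<i> * \<tau>) ^ 2 = q"
  proof -
    have "exp (pi * \<i> * \<tau>) ^ 2 = exp (pi * \<i> * \<tau> + pi * \<i> * \<tau>)"
      by (simp only: power2_eq_square exp_add)
    also have "pi * \<i> * \<tau> + pi * \<i> * \<tau> = 2 * pi * \<i> * \<tau>" unfolding of_real_mult of_real_numeral by algebra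
    finally show ?thesis by (simp only: q_def nome_def)
  qed
  have v1: "(v_fun \<tau>)^2 = q * (Pf q)^2"
    unfolding v_fun_Pf q_def[symmetric] power_mult_distrib eq ..
  have e2: "exp (pi * \<i> * (2 * \<tau>)) = q"
  proof -
    have "pi * \<i> * (2 * \<tau>) = 2 * pi * \<i> * \<tau>" unfolding of_real_mult of_real_numeral by algebra
    then show ?thesis by (simp only: q_def nome_def)
  qed
  have n2: "nome (2 * \<tau>) = q ^ 2"
  proof -
    have "2 * pi * \<i> * (2 * \<tau>) = 2 * pi * \<i> * \<tau> + 2 * pi * \<i> * \<tau>" unfolding of_real_mult of_real_numeral by algebra
    then have "nome (2 * \<tau>) = exp (2 * pi * \<i> * \<tau>) * exp (2 * pi * \<i> * \<tau>)"
      unfolding nome_def by (simp only: exp_add)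
    then show ?thesis by (simp only: q_def nome_def power2_eq_square)
  qed
  have v2: "(v_fun (2 * \<tau>))^2 = q^2 * (Pf q * Pf (-q))^2"
    unfolding v_fun_Pf e2 n2 Pf_mult[OF q1, symmetric] power_mult_distrib ..
  have mq0: "-q \<noteq> 0" using q0 by simp
  have mq1: "norm (-q) < 1" using q1 by simp
  have a: "Pf q \<noteq> 0" by (rule key(1)[OF q0 q1])
  have b: "Pf (-q) \<noteq> 0" by (rule key(1)[OF mq0 mq1])
  have h: "1 / Pf q - q * Pf q = 1 / Pf (-q) + q * Pf (-q)"
  proof -
    have "1 / Pf (-q) + q * Pf (-q) = 1 / Pf (-q) - (-q) * Pf (-q)" by simp
    also have "\<dots> = thF (-q) * E4 (-q) / E8 (-q) ^ 2" by (rule key(2)[OF mq0 mq1])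
    also have "\<dots> = thF q * E4 q / E8 q ^ 2" by (simp only: thF_even E4_even E8_even)
    also have "\<dots> = 1 / Pf q - q * Pf q" by (rule key(2)[OF q0 q1, symmetric])
    finally show ?thesis by simp
  qed
  show ?thesis unfolding v1 v2 by (rule final_alg[OF a b h])
qed

end
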